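(* Let $X$ be a semi-permutation, let $T$ be any partitioning tree for $X$, let $U\subseteq V(T)$ be a set of vertices such that every root-to-leaf path of $T$ contains exactly one vertex of $U$, and let $(X^c,\{X^s_v\}_{v\in U})$ be the split of $(X,T)$ at $U$. Then $$\sum_{v\in U}\mathrm{opt}(X^s_v)+\mathrm{opt}(X^c)\le \mathrm{opt}(X).$$
   Context: Points have integer coordinates. Two points $p,q$ are collinear if $p.x=q.x$ or $p.y=q.y$; otherwise $\square_{p,q}$ is the smallest closed axis-parallel rectangle containing both. A non-collinear pair $(p,q)$ is satisfied in $S$ if some $r\in S\setminus\{p,q\}$ lies in $\square_{p,q}$; $S$ is satisfied if all its non-collinear pairs are. A row (column) is active for $X$ if it contains a point of $X$; $X$ is a semi-permutation if each active row contains exactly one point of $X$. $\mathrm{opt}(X)$ is the minimum $|Y|$ with $X\cup Y$ satisfied (and is $0$ if $X$ has one active column). Partitioning tree: let $B$ be the bounding box of $X$ and $\mathcal L$ the set of vertical lines with half-integral $x$-coordinate strictly between the minimum and maximum $x$-coordinates of $X$. A partitioning tree $T$ is a rooted binary tree whose vertices $v$ carry closed vertical strips $S(v)$: $S(\mathrm{root})=B$; an internal vertex $v$ owns a line $L(v)\in\mathcal L$ lying strictly inside $S(v)$ and its two children carry the two strips into which $L(v)$ splits $S(v)$; each leaf strip contains exactly one active column of $X$ (this is the tree produced by processing the lines of $\mathcal L$ in some order, each line splitting the current strip containing it). Split at $U$: for $v\in U$, the strip instance $X^s_v=X\cap S(v)$; the compressed instance $X^c$ is obtained by replacing, for every $v\in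 U$, each point $p\in X\cap S(v)$ by the point $(x_v,p.y)$, where $x_v$ is the $x$-coordinate of the leftmost active column of $X$ in $S(v)$ (i.e., collapsing all active columns of each strip $S(v)$ into one column). *)

theory Defs
  imports Main
begin

type_synonym point = "int \<times> int"

definition collinear :: "point \<Rightarrow> point \<Rightarrow> bool" where
  "collinear p q \<longleftrightarrow> fst p = fst q \<or> snd p = snd q"

definition rect :: "point \<Rightarrow> point \<Rightarrow> point set" where
  "rect p q = {r. min (fst p) (fst q) \<le> fst r \<and> fst r \<le> max (fst p) (fst q)
                 \<and> min (snd p) (snd q) \<le> snd r \<and> snd r \<le> max (snd p) (snd q)}"

definition pair_satisfied :: "point set \<Rightarrow> point \<Rightarrow> point \<Rightarrow> bool" where
  "pair_satisfied S p q \<longleftrightarrow> collinear p q \<or> (\<exists>r \<in> S - {p, q}. r \<in> rect p q)"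

definition satisfied :: "point set \<Rightarrow> bool" where
  "satisfied S \<longleftrightarrow> (\<forall>p\<in>S. \<forall>q\<in>S. pair_satisfied S p q)"

definition semi_perm :: "point set \<Rightarrow> bool" where
  "semi_perm X \<longleftrightarrow> (\<forall>p\<in>X. \<forall>q\<in>X. snd p = snd q \<longrightarrow> p = q)"

definition opt :: "point set \<Rightarrow> nat" where
  "opt X = (if card (fst ` X) \<le> 1 then 0
            else (LEAST n. \<exists>Y. finite Y \<and> card Y = n \<and> satisfied (X \<union> Y)))"

(* Partitioning tree: a node Node k l r owns the vertical line x = k + 1/2.
   Strips are represented by their (integer) column range [lo, hi]; the integer
   points of the closed strip are exactly those with lo \<le> x \<le> hi. *)
datatype ptree = Leaf | Node int ptree ptree

definition active_cols :: "point set \<Rightarrow> int \<Rightarrow> int \<Rightarrow> int set" where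
  "active_cols X lo hi = {c. lo \<le> c \<and> c \<le> hi \<and> c \<in> fst ` X}"

fun is_ptree :: "point set \<Rightarrow> int \<Rightarrow> int \<Rightarrow> ptree \<Rightarrow> bool" where
  "is_ptree X lo hi Leaf \<longleftrightarrow> card (active_cols X lo hi) = 1"
| "is_ptree X lo hi (Node k l r) \<longleftrightarrow>
     lo \<le> k \<and> k + 1 \<le> hi \<and> is_ptree X lo k l \<and> is_ptree X (k + 1) hi r"

definition partitioning_tree :: "point set \<Rightarrow> ptree \<Rightarrow> bool" where
  "partitioning_tree X t \<longleftrightarrow> is_ptree X (Min (fst ` X)) (Max (fst ` X)) t"

(* vertices: (path from root, lo, hi) ; False = left child, True = right child *)
fun ptree_nodes :: "int \<Rightarrow> int \<Rightarrow> ptree \<Rightarrow> (bool list \<times> int \<times> int) set" where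
  "ptree_nodes lo hi Leaf = {([], lo, hi)}"
| "ptree_nodes lo hi (Node k l r) = {([], lo, hi)}
     \<union> (\<lambda>(p, a, b). (False # p, a, b)) ` ptree_nodes lo k l
     \<union> (\<lambda>(p, a, b). (True # p, a, b)) ` ptree_nodes (k + 1) hi r"

fun ptree_leaves :: "int \<Rightarrow> int \<Rightarrow> ptree \<Rightarrow> (bool list \<times> int \<times> int) set" where
  "ptree_leaves lo hi Leaf = {([], lo, hi)}"
| "ptree_leaves lo hi (Node k l r) =
     (\<lambda>(p, a, b). (False # p, a, b)) ` ptree_leaves lo k l
     \<union> (\<lambda>(p, a, b). (True # p, a, b)) ` ptree_leaves (k + 1) hi r"

definition vertices :: "point set \<Rightarrow> ptree \<Rightarrow> (bool list \<times> int \<times> int) set" where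
  "vertices X t = ptree_nodes (Min (fst ` X)) (Max (fst ` X)) t"

definition leaves :: "point set \<Rightarrow> ptree \<Rightarrow> (bool list \<times> int \<times> int) set" where
  "leaves X t = ptree_leaves (Min (fst ` X)) (Max (fst ` X)) t"

definition cut_set :: "point set \<Rightarrow> ptree \<Rightarrow> (bool list \<times> int \<times> int) set \<Rightarrow> bool" where
  "cut_set X t U \<longleftrightarrow> U \<subseteq> vertices X t \<and>
     (\<forall>l \<in> leaves X t. card {v \<in> U. \<exists>n. fst v = take n (fst l)} = 1)"

definition strip_inst :: "point set \<Rightarrow> bool list \<times> int \<times> int \<Rightarrow> point set" where
  "strip_inst X v = {q \<in> X. fst (snd v) \<le> fst q \<and> fst q \<le> snd (snd v)}"

definition strip_x :: "point set \<Rightarrow> bool list \<times> int \<times> int \<Rightarrow> int" where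
  "strip_x X v = Min (fst ` strip_inst X v)"

definition compressed :: "point set \<Rightarrow> (bool list \<times> int \<times> int) set \<Rightarrow> point set" where
  "compressed X U = {(strip_x X v, snd q) | q v. v \<in> U \<and> q \<in> strip_inst X v}"

end

theory Submission
  imports Defs
begin


lemma rect_sub: "r \<in> rect p q \<Longrightarrow> rect r q \<subseteq> rect p q"
  unfolding rect_def by auto

lemma rect_notin: "r \<in> rect p q \<Longrightarrow> r \<noteq> p \<Longrightarrow> p \<notin> rect r q"
  unfolding rect_def by (auto simp: prod_eq_iff)

lemma rect_self: "p \<in> rect p q"
  unfolding rect_def by auto

lemma rect_map:
  assumes "r \<in> rect p q"
    and m1: "fst p \<le> fst r \<Longrightarrow> h1 (fst p) \<le> h1 (fst r)" "fst r \<le> fst p \<Longrightarrow> h1 (fst r) \<le> h1 (fst p)"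
       "fst q \<le> fst r \<Longrightarrow> h1 (fst q) \<le> h1 (fst r)" "fst r \<le> fst q \<Longrightarrow> h1 (fst r) \<le> h1 (fst q)"
    and m2: "snd p \<le> snd r \<Longrightarrow> h2 (snd p) \<le> h2 (snd r)" "snd r \<le> snd p \<Longrightarrow> h2 (snd r) \<le> h2 (snd p)"
       "snd q \<le> snd r \<Longrightarrow> h2 (snd q) \<le> h2 (snd r)" "snd r \<le> snd q \<Longrightarrow> h2 (snd r) \<le> h2 (snd q)"
  shows "(h1 (fst r), h2 (snd r)) \<in> rect (h1 (fst p), h2 (snd p)) (h1 (fst q), h2 (snd q))"
  using assms unfolding rect_def by (auto simp: min_def max_def split: if_splits)

lemma mono_sat:
  fixes h1 h2 :: "int \<Rightarrow> int"
  assumes fin: "finite Z" and sat: "satisfied Z"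
    and m1: "\<And>p q. p \<in> Z \<Longrightarrow> q \<in> Z \<Longrightarrow> fst p \<le> fst q \<Longrightarrow> h1 (fst p) \<le> h1 (fst q)"
    and m2: "\<And>p q. p \<in> Z \<Longrightarrow> q \<in> Z \<Longrightarrow> snd p \<le> snd q \<Longrightarrow> h2 (snd p) \<le> h2 (snd q)"
  shows "satisfied ((\<lambda>p. (h1 (fst p), h2 (snd p))) ` Z)"
proof -
  define g where "g = (\<lambda>p::point. (h1 (fst p), h2 (snd p)))"
  have gr: "g r \<in> rect (g p) (g q)" if "r \<in> rect p q" "p \<in> Z" "q \<in> Z" "r \<in> Z" for p q r
    unfolding g_def by (rule rect_map[OF that(1)]) (use that m1 m2 in auto)
  have key: "\<forall>p q. p \<in> Z \<longrightarrow> q \<in> Z \<longrightarrow> card (Z \<inter> rect p q) = n \<longrightarrow> \<not> collinear (g p) (g q)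
     \<longrightarrow> (\<exists>r\<in>g ` Z - {g p, g q}. r \<in> rect (g p) (g q))" for n
  proof (induction n rule: less_induct)
    case (less n)
    show ?case
    proof (intro allI impI)
      fix p q assume p: "p \<in> Z" and q: "q \<in> Z" and cn: "card (Z \<inter> rect p q) = n"
        and nc: "\<not> collinear (g p) (g q)"
      have "\<not> collinear p q" using nc unfolding collinear_def g_def by auto
      then obtain r where r: "r \<in> Z" "r \<noteq> p" "r \<noteq> q" "r \<in> rect p q"
        using sat p q unfolding satisfied_def pair_satisfied_def by blast
      have grr: "g r \<in> rect (g p) (g q)" using gr r p q by blast
      show "\<exists>s\<in>g ` Z - {g p, g q}. s \<in> rect (g p) (g q)"
      proof (cases "g r = g p")
        case True
        have "Z \<inter> rect r q \<subset> Z \<inter> rect p q"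
          using rect_sub[OF r(4)] rect_notin[OF r(4) r(2)] p rect_self[of p q] by blast
        hence "card (Z \<inter> rect r q) < n" using cn fin by (metis finite_Int psubset_card_mono)
        with less r(1) q nc True obtain s where "s \<in> g ` Z - {g r, g q}" "s \<in> rect (g r) (g q)"
          by metis
        thus ?thesis using True by auto
      next
        case False
        show ?thesis
        proof (cases "g r = g q")
          case True
          have rr: "r \<in> rect q p" using r(4) unfolding rect_def by auto
          have "Z \<inter> rect r p \<subset> Z \<inter> rect q p"
            using rect_sub[OF rr] rect_notin[OF rr r(3)] q rect_self[of q p] by blast
          moreover have "rect q p = rect p q" "rect r p = rect p r" unfolding rect_def by auto
          ultimately have "Z \<inter> rect p r \<subset> Z \<inter> rect p q" by simp
          hence "card (Z \<inter> rect p r) < n" using cn fin by (metis finite_Int psubset_card_mono)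
          with less r(1) p nc True obtain s where "s \<in> g ` Z - {g p, g r}" "s \<in> rect (g p) (g r)"
            by metis
          thus ?thesis using True by auto
        next
          case False
          thus ?thesis using \<open>g r \<noteq> g p\<close> grr r(1) by auto
        qed
      qed
    qed
  qed
  show ?thesis
    unfolding satisfied_def pair_satisfied_def g_def[symmetric]
    using key by blast
qed

lemma restrict_sat:
  assumes "satisfied S"
  shows "satisfied {p \<in> S. a \<le> fst p \<and> fst p \<le> b}"
  unfolding satisfied_def
proof (intro ballI)
  fix p q assume p: "p \<in> {p \<in> S. a \<le> fst p \<and> fst p \<le> b}" and q: "q \<in> {p \<in> S. a \<le> fst p \<and> fst p \<le> b}"
  have "pair_satisfied S p q" using assms p q unfolding satisfied_def by auto
  then show "pair_satisfied {p \<in> S. a \<le> fst p \<and> fst p \<le> b} p q"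
    unfolding pair_satisfied_def
  proof (elim disjE)
    assume "\<exists>r\<in>S - {p, q}. r \<in> rect p q"
    then obtain r where r: "r \<in> S - {p,q}" "r \<in> rect p q" by blast
    have "a \<le> fst r \<and> fst r \<le> b" using r(2) p q unfolding rect_def by auto
    thus "collinear p q \<or> (\<exists>r\<in>{p \<in> S. a \<le> fst p \<and> fst p \<le> b} - {p, q}. r \<in> rect p q)"
      using r by blast
  qed simp
qed



lemma opt_le:
  assumes "finite Z" "satisfied Z" "W \<subseteq> Z"
  shows "opt W \<le> card (Z - W)"
proof -
  have "W \<union> (Z - W) = Z" using assms(3) by auto
  hence "\<exists>Y. finite Y \<and> card Y = card (Z - W) \<and> satisfied (W \<union> Y)" using assms by auto
  thus ?thesis unfolding opt_def by (auto intro: Least_le)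
qed

lemma grid_sat: "satisfied (A \<times> B)"
  unfolding satisfied_def pair_satisfied_def collinear_def
proof (intro ballI)
  fix p q assume "p \<in> A \<times> B" "q \<in> A \<times> B"
  show "(fst p = fst q \<or> snd p = snd q) \<or> (\<exists>r\<in>A \<times> B - {p, q}. r \<in> rect p q)"
  proof (cases "fst p = fst q \<or> snd p = snd q")
    case False
    have "(fst p, snd q) \<in> A \<times> B - {p, q}" using False \<open>p \<in> A \<times> B\<close> \<open>q \<in> A \<times> B\<close> by (auto simp: prod_eq_iff)
    moreover have "(fst p, snd q) \<in> rect p q" unfolding rect_def by auto
    ultimately show ?thesis by blast
  qed simp
qed

lemma grid_cover: "X \<union> (fst ` X \<times> snd ` X) = fst ` X \<times> snd ` X"
proof -
  have "X \<subseteq> fst ` X \<times> snd ` X"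
  proof
    fix p assume "p \<in> X" thus "p \<in> fst ` X \<times> snd ` X" by (simp add: mem_Times_iff)
  qed
  thus ?thesis by blast
qed

lemma opt_least: "(\<exists>Y. finite Y \<and> card Y = n \<and> satisfied (X \<union> Y)) \<Longrightarrow> \<not> card (fst ` X) \<le> 1 \<Longrightarrow>
   \<exists>Y. finite Y \<and> card Y = opt X \<and> satisfied (X \<union> Y)"
  unfolding opt_def apply (simp only: if_False)
  by (rule LeastI)

lemma opt_exists:
  assumes "finite X"
  shows "\<exists>Y. finite Y \<and> card Y = opt X \<and> satisfied (X \<union> Y)"
proof (cases "card (fst ` X) \<le> 1")
  case True
  have "finite (fst ` X)" using assms by simp
  moreover have "card (fst ` X) \<le> Suc 0" using True by simp
  ultimately have "\<forall>a1\<in>fst ` X. \<forall>a2\<in>fst ` X. a1 = a2" using card_le_Suc0_iff_eq by blast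
  hence "satisfied X" unfolding satisfied_def pair_satisfied_def collinear_def by blast
  moreover have "opt X = 0" using True unfolding opt_def by simp
  ultimately show ?thesis by (intro exI[of _ "{}"]) simp
next
  case False
  have f: "finite (fst ` X \<times> snd ` X)" using assms by simp
  have "\<exists>Y. finite Y \<and> card Y = card (fst ` X \<times> snd ` X) \<and> satisfied (X \<union> Y)"
    by (rule exI[of _ "fst ` X \<times> snd ` X"]) (simp only: grid_cover f grid_sat simp_thms)
  thus ?thesis using False by (rule opt_least)
qed

lemma between_abs: fixes x y z :: int
  assumes "min x z \<le> y" "y \<le> max x z" "y \<noteq> x" "nat \<bar>x - z\<bar> \<le> nat \<bar>y - z\<bar>" shows False
  using assms by (simp add: min_def max_def split: if_splits)

lemma shared_col:
  fixes a b :: int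
  assumes fin: "finite Z" and sat: "satisfied Z" and ab: "a \<noteq> b"
    and pa: "pa \<in> Z" "snd pa = a" and qb: "qb \<in> Z" "snd qb = b"
    and gap: "\<And>p. p \<in> Z \<Longrightarrow> min a b \<le> snd p \<Longrightarrow> snd p \<le> max a b \<Longrightarrow> snd p = a \<or> snd p = b"
  shows "\<exists>c. (c, a) \<in> Z \<and> (c, b) \<in> Z"
proof (rule ccontr)
  assume nc: "\<not> (\<exists>c. (c, a) \<in> Z \<and> (c, b) \<in> Z)"
  define P where "P = {(p,q). p \<in> Z \<and> q \<in> Z \<and> snd p = a \<and> snd q = b}"
  define D where "D = (\<lambda>(p,q). nat \<bar>fst p - fst q\<bar>) ` P"
  have "P \<subseteq> Z \<times> Z" unfolding P_def by blast
  hence "finite P" using fin by (meson finite_SigmaI finite_subset)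
  hence "finite D" unfolding D_def by simp
  have "(pa, qb) \<in> P" unfolding P_def using pa qb by simp
  hence "D \<noteq> {}" unfolding D_def by blast
  with \<open>finite D\<close> have "Min D \<in> D" by simp
  then obtain p q where pqP: "(p,q) \<in> P" and pq5: "nat \<bar>fst p - fst q\<bar> = Min D"
    unfolding D_def by auto
  have pq: "p \<in> Z" "q \<in> Z" "snd p = a" "snd q = b" using pqP unfolding P_def by auto
  have minD: "nat \<bar>fst p - fst q\<bar> \<le> nat \<bar>fst p' - fst q'\<bar>" if "p' \<in> Z" "q' \<in> Z" "snd p' = a" "snd q' = b" for p' q'
  proof -
    have "(p', q') \<in> P" unfolding P_def using that by simp
    hence "nat \<bar>fst p' - fst q'\<bar> \<in> D" unfolding D_def by force
    thus ?thesis using pq5 \<open>finite D\<close> by simp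
  qed
  have inZ: "(fst s, snd s) \<in> Z" if "s \<in> Z" for s using that by simp
  have nq: "fst p \<noteq> fst q"
  proof
    assume e: "fst p = fst q"
    have "(fst p, a) \<in> Z" using inZ[OF pq(1)] pq(3) by simp
    moreover have "(fst p, b) \<in> Z" using inZ[OF pq(2)] pq(4) e by simp
    ultimately show False using nc by blast
  qed
  hence "\<not> collinear p q" using ab pq unfolding collinear_def by auto
  then obtain r where r: "r \<in> Z" "r \<noteq> p" "r \<noteq> q" "r \<in> rect p q"
    using sat pq unfolding satisfied_def pair_satisfied_def by blast
  have rb: "min (fst p) (fst q) \<le> fst r" "fst r \<le> max (fst p) (fst q)"
     "min a b \<le> snd r" "snd r \<le> max a b" using r(4) pq unfolding rect_def by auto
  have "snd r = a \<or> snd r = b" using gap[OF r(1) rb(3,4)] .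
  then show False
  proof
    assume ra: "snd r = a"
    have "fst r \<noteq> fst p" using ra pq(3) r(2) by (auto simp: prod_eq_iff)
    moreover have "fst r \<noteq> fst q"
    proof
      assume e: "fst r = fst q"
      have "(fst r, a) \<in> Z" using inZ[OF r(1)] ra by simp
      moreover have "(fst r, b) \<in> Z" using inZ[OF pq(2)] pq(4) e by simp
      ultimately show False using nc by blast
    qed
    moreover have "nat \<bar>fst p - fst q\<bar> \<le> nat \<bar>fst r - fst q\<bar>" using minD[OF r(1) pq(2) ra pq(4)] .
    ultimately show False using rb(1,2) between_abs[of "fst p" "fst q" "fst r"] by blast
  next
    assume rb': "snd r = b"
    have "fst r \<noteq> fst q" using rb' pq(4) r(3) by (auto simp: prod_eq_iff)
    moreover have "fst r \<noteq> fst p"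
    proof
      assume e: "fst r = fst p"
      have "(fst r, b) \<in> Z" using inZ[OF r(1)] rb' by simp
      moreover have "(fst r, a) \<in> Z" using inZ[OF pq(1)] pq(3) e by simp
      ultimately show False using nc by blast
    qed
    moreover have "nat \<bar>fst q - fst p\<bar> \<le> nat \<bar>fst r - fst p\<bar>" using minD[OF pq(1) r(1) pq(3) rb'] by (simp add: abs_minus_commute)
    ultimately show False using rb(1,2) between_abs[of "fst q" "fst p" "fst r"] by (simp add: min.commute max.commute)
  qed
qed



lemma semi_perm_card: "semi_perm X \<Longrightarrow> card (snd ` X) = card X"
  unfolding semi_perm_def by (intro card_image inj_onI) blast

lemma rows_bound_aux:
  "\<forall>Z. card (snd ` Z) = n \<longrightarrow> finite Z \<longrightarrow> satisfied Z \<longrightarrow> X \<subseteq> Z \<longrightarrow> semi_perm X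
     \<longrightarrow> opt X + card (snd ` Z) \<le> card Z"
proof (induction n rule: less_induct)
  case (less n)
  show ?case
  proof (intro allI impI)
    fix Z :: "point set"
    assume n: "card (snd ` Z) = n" and fin: "finite Z" and sat: "satisfied Z" and XZ: "X \<subseteq> Z"
      and sp: "semi_perm X"
    show "opt X + card (snd ` Z) \<le> card Z"
    proof (cases "snd ` Z \<subseteq> snd ` X")
      case True
      hence "snd ` Z = snd ` X" using XZ by auto
      hence "card (snd ` Z) = card X" using semi_perm_card[OF sp] by simp
      moreover have "opt X \<le> card (Z - X)" using opt_le[OF fin sat XZ] .
      moreover have "card (Z - X) = card Z - card X" using fin XZ by (meson card_Diff_subset finite_subset)
      moreover have "card X \<le> card Z" using fin XZ by (simp add: card_mono)
      ultimately show ?thesis by linarith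
    next
      case False
      then obtain a where aZ: "a \<in> snd ` Z" and aX: "a \<notin> snd ` X" by auto
      show ?thesis
      proof (cases "snd ` Z - {a} = {}")
        case True
        hence "snd ` X \<subseteq> {a}" using XZ by auto
        hence "X = {}" using aX by auto
        hence "opt X = 0" unfolding opt_def by simp
        moreover have "card (snd ` Z) \<le> card Z" using fin by (rule card_image_le)
        ultimately show ?thesis by simp
      next
        case False
        define R where "R = snd ` Z - {a}"
        have finR: "finite R" unfolding R_def using fin by simp
        define M where "M = Min ((\<lambda>y. \<bar>y - a\<bar>) ` R)"
        have "M \<in> (\<lambda>y. \<bar>y - a\<bar>) ` R" unfolding M_def using finR False R_def by simp
        then obtain b where bR: "b \<in> R" and bM: "\<bar>b - a\<bar> = M" by auto
        have bmin: "\<bar>b - a\<bar> \<le> \<bar>y - a\<bar>" if "y \<in> R" for y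
          using that finR bM unfolding M_def by simp
        have ab: "a \<noteq> b" using bR unfolding R_def by simp
        have bZ: "b \<in> snd ` Z" using bR unfolding R_def by simp
        have gap: "snd p = a \<or> snd p = b" if "p \<in> Z" "min a b \<le> snd p" "snd p \<le> max a b" for p
        proof (rule ccontr)
          assume "\<not> (snd p = a \<or> snd p = b)"
          hence "snd p \<in> R" "\<bar>snd p - a\<bar> < \<bar>b - a\<bar>" using that unfolding R_def
            by (auto simp: min_def max_def split: if_splits)
          thus False using bmin by fastforce
        qed
        obtain pa where pa: "pa \<in> Z" "snd pa = a" using aZ by auto
        obtain qb where qb: "qb \<in> Z" "snd qb = b" using bZ by auto
        obtain c where c: "(c, a) \<in> Z" "(c, b) \<in> Z"
          using shared_col[OF fin sat ab pa qb gap] by blast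
        define h2 where "h2 = (\<lambda>y. if min a b \<le> y \<and> y \<le> max a b then b else y)"
        define g where "g = (\<lambda>p::point. (id (fst p), h2 (snd p)))"
        define Z' where "Z' = g ` Z"
        have gZ: "g p = (if snd p = a then (fst p, b) else p)" if "p \<in> Z" for p
          using gap[OF that] unfolding g_def h2_def by (auto simp: min_def max_def)
        have sat': "satisfied Z'" unfolding Z'_def g_def
          by (rule mono_sat[OF fin sat]) (auto simp: h2_def min_def max_def)
        have fin': "finite Z'" unfolding Z'_def using fin by simp
        have XZ': "X \<subseteq> Z'"
        proof
          fix p assume "p \<in> X"
          hence "p \<in> Z" "snd p \<noteq> a" using XZ aX by auto
          hence "g p = p" using gZ by simp
          thus "p \<in> Z'" unfolding Z'_def using \<open>p \<in> Z\<close> by (metis image_eqI)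
        qed
        have rows': "snd ` Z' = snd ` Z - {a}"
        proof
          show "snd ` Z' \<subseteq> snd ` Z - {a}"
          proof
            fix y assume "y \<in> snd ` Z'"
            then obtain p where p: "p \<in> Z" "y = snd (g p)" unfolding Z'_def by auto
            show "y \<in> snd ` Z - {a}"
            proof (cases "snd p = a")
              case True thus ?thesis using p gZ[OF p(1)] bZ ab by simp
            next
              case False thus ?thesis using p gZ[OF p(1)] by simp
            qed
          qed
          show "snd ` Z - {a} \<subseteq> snd ` Z'"
          proof
            fix y assume "y \<in> snd ` Z - {a}"
            then obtain p where "p \<in> Z" "snd p = y" "y \<noteq> a" by auto
            hence "g p = p" "p \<in> Z" using gZ by auto
            hence "p \<in> Z'" unfolding Z'_def by (metis image_eqI)
            thus "y \<in> snd ` Z'" using \<open>snd p = y\<close> by blast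
          qed
        qed
        have cr: "card (snd ` Z') = card (snd ` Z) - 1" using rows' aZ fin by simp
        have cpos: "card (snd ` Z) \<ge> 1" using aZ fin by (metis One_nat_def Suc_leI card_gt_0_iff empty_iff finite_imageI)
        have "Z' = g ` (Z - {(c, a)})"
        proof
          show "g ` (Z - {(c, a)}) \<subseteq> Z'" unfolding Z'_def by auto
          show "Z' \<subseteq> g ` (Z - {(c, a)})"
          proof
            fix z assume "z \<in> Z'"
            then obtain p where p: "p \<in> Z" "z = g p" unfolding Z'_def by auto
            show "z \<in> g ` (Z - {(c, a)})"
            proof (cases "p = (c, a)")
              case True
              have "g (c, a) = (c, b)" using gZ[OF c(1)] by simp
              moreover have "g (c, b) = (c, b)" using gZ[OF c(2)] ab by simp
              ultimately have "z = g (c, b)" using p True by simp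
              moreover have "(c, b) \<in> Z - {(c, a)}" using c(2) ab by simp
              ultimately show ?thesis by blast
            next
              case False
              thus ?thesis using p by blast
            qed
          qed
        qed
        hence "card Z' \<le> card (Z - {(c, a)})" using card_image_le fin by (metis finite_Diff)
        hence cZ: "card Z' \<le> card Z - 1" using c(1) fin by simp
        have "card (snd ` Z') < n" using cr cpos n by simp
        hence "opt X + card (snd ` Z') \<le> card Z'"
          using less fin' sat' XZ' sp by blast
        moreover have "card (snd ` Z) \<le> card Z" using fin by (rule card_image_le)
        ultimately show ?thesis using cr cZ cpos by linarith
      qed
    qed
  qed
qed

lemma rows_bound:
  "finite Z \<Longrightarrow> satisfied Z \<Longrightarrow> X \<subseteq> Z \<Longrightarrow> semi_perm X \<Longrightarrow> opt X + card (snd ` Z) \<le> card Z"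
  using rows_bound_aux by blast



lemma root_in_nodes: "([], lo, hi) \<in> ptree_nodes lo hi t"
  by (cases t) auto

lemma ptree_active: "is_ptree X lo hi t \<Longrightarrow> active_cols X lo hi \<noteq> {}"
proof (induction t arbitrary: lo hi)
  case Leaf thus ?case by auto
next
  case (Node k l r)
  hence "active_cols X lo k \<noteq> {}" "lo \<le> k" "k + 1 \<le> hi" by auto
  moreover have "active_cols X lo k \<subseteq> active_cols X lo hi"
    using \<open>k + 1 \<le> hi\<close> unfolding active_cols_def by auto
  ultimately show ?case by blast
qed

lemma ptree_nodes_props:
  "is_ptree X lo hi t \<Longrightarrow> v \<in> ptree_nodes lo hi t \<Longrightarrow>
    lo \<le> fst (snd v) \<and> snd (snd v) \<le> hi \<and> active_cols X (fst (snd v)) (snd (snd v)) \<noteq> {}"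
proof (induction t arbitrary: lo hi v)
  case Leaf thus ?case using ptree_active by fastforce
next
  case (Node k l r)
  from Node.prems have k: "lo \<le> k" "k + 1 \<le> hi" and pl: "is_ptree X lo k l" and pr: "is_ptree X (k+1) hi r" by auto
  from Node.prems(2) consider "v = ([], lo, hi)"
    | (L) w where "w \<in> ptree_nodes lo k l" "v = (False # fst w, snd w)"
    | (R) w where "w \<in> ptree_nodes (k+1) hi r" "v = (True # fst w, snd w)"
    by (auto split: prod.splits)
  thus ?case
  proof cases
    case 1 thus ?thesis using ptree_active[OF Node.prems(1)] by simp
  next
    case L thus ?thesis using Node.IH(1)[OF pl L(1)] k by auto
  next
    case R thus ?thesis using Node.IH(2)[OF pr R(1)] k by auto
  qed
qed

lemma take_False_cons: "(\<exists>n. False # p = take n (False # q)) \<longleftrightarrow> (\<exists>n. p = take n q)"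
proof
  assume "\<exists>n. False # p = take n (False # q)"
  then obtain n where "False # p = take n (False # q)" by blast
  thus "\<exists>n. p = take n q" by (cases n) auto
next
  assume "\<exists>n. p = take n q"
  then obtain n where "p = take n q" by blast
  hence "False # p = take (Suc n) (False # q)" by simp
  thus "\<exists>n. False # p = take n (False # q)" by blast
qed

lemma take_True_cons: "(\<exists>n. True # p = take n (True # q)) \<longleftrightarrow> (\<exists>n. p = take n q)"
proof
  assume "\<exists>n. True # p = take n (True # q)"
  then obtain n where "True # p = take n (True # q)" by blast
  thus "\<exists>n. p = take n q" by (cases n) auto
next
  assume "\<exists>n. p = take n q"
  then obtain n where "p = take n q" by blast
  hence "True # p = take (Suc n) (True # q)" by simp
  thus "\<exists>n. True # p = take n (True # q)" by blast
qed

lemma take_diff_cons: "b \<noteq> c \<Longrightarrow> \<not> (\<exists>n. b # p = take n (c # q))"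
proof
  assume "b \<noteq> c" "\<exists>n. b # p = take n (c # q)"
  then obtain n where "b # p = take n (c # q)" by blast
  thus False using \<open>b \<noteq> c\<close> by (cases n) auto
qed

lemma ptree_locate:
  "is_ptree X lo hi t \<Longrightarrow> lo \<le> c \<Longrightarrow> c \<le> hi \<Longrightarrow>
   \<exists>l \<in> ptree_leaves lo hi t. \<forall>v \<in> ptree_nodes lo hi t.
      (fst (snd v) \<le> c \<and> c \<le> snd (snd v)) \<longleftrightarrow> (\<exists>n. fst v = take n (fst l))"
proof (induction t arbitrary: lo hi)
  case Leaf
  thus ?case by (intro bexI[of _ "([], lo, hi)"]) auto
next
  case (Node k l r)
  from Node.prems have k: "lo \<le> k" "k + 1 \<le> hi" and pl: "is_ptree X lo k l" and pr: "is_ptree X (k+1) hi r" by auto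
  show ?case
  proof (cases "c \<le> k")
    case True
    obtain lf where lf: "lf \<in> ptree_leaves lo k l"
      and H: "\<forall>v \<in> ptree_nodes lo k l. (fst (snd v) \<le> c \<and> c \<le> snd (snd v)) \<longleftrightarrow> (\<exists>n. fst v = take n (fst lf))"
      using Node.IH(1)[OF pl Node.prems(2) True] by blast
    define lf' where "lf' = (False # fst lf, snd lf)"
    have "lf' \<in> ptree_leaves lo hi (Node k l r)" unfolding lf'_def using lf by force
    moreover have "(fst (snd v) \<le> c \<and> c \<le> snd (snd v)) \<longleftrightarrow> (\<exists>n. fst v = take n (fst lf'))"
      if v: "v \<in> ptree_nodes lo hi (Node k l r)" for v
    proof -
      from v consider "v = ([], lo, hi)"
        | (L) w where "w \<in> ptree_nodes lo k l" "v = (False # fst w, snd w)"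
        | (R) w where "w \<in> ptree_nodes (k+1) hi r" "v = (True # fst w, snd w)"
        by (auto split: prod.splits)
      thus ?thesis
      proof cases
        case 1 thus ?thesis using Node.prems by (auto intro: exI[of _ 0])
      next
        case L thus ?thesis using H L(1) take_False_cons unfolding lf'_def by simp
      next
        case R
        have "k + 1 \<le> fst (snd w)" using ptree_nodes_props[OF pr R(1)] by simp
        thus ?thesis using R True take_diff_cons[of True False] unfolding lf'_def by auto
      qed
    qed
    ultimately show ?thesis by blast
  next
    case False
    obtain lf where lf: "lf \<in> ptree_leaves (k+1) hi r"
      and H: "\<forall>v \<in> ptree_nodes (k+1) hi r. (fst (snd v) \<le> c \<and> c \<le> snd (snd v)) \<longleftrightarrow> (\<exists>n. fst v = take n (fst lf))"
      using Node.IH(2)[OF pr _ Node.prems(3)] False by fastforce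
    define lf' where "lf' = (True # fst lf, snd lf)"
    have "lf' \<in> ptree_leaves lo hi (Node k l r)" unfolding lf'_def using lf by force
    moreover have "(fst (snd v) \<le> c \<and> c \<le> snd (snd v)) \<longleftrightarrow> (\<exists>n. fst v = take n (fst lf'))"
      if v: "v \<in> ptree_nodes lo hi (Node k l r)" for v
    proof -
      from v consider "v = ([], lo, hi)"
        | (L) w where "w \<in> ptree_nodes lo k l" "v = (False # fst w, snd w)"
        | (R) w where "w \<in> ptree_nodes (k+1) hi r" "v = (True # fst w, snd w)"
        by (auto split: prod.splits)
      thus ?thesis
      proof cases
        case 1 thus ?thesis using Node.prems by (auto intro: exI[of _ 0])
      next
        case R thus ?thesis using H R(1) take_True_cons unfolding lf'_def by simp
      next
        case L
        have "snd (snd w) \<le> k" using ptree_nodes_props[OF pl L(1)] by simp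
        thus ?thesis using L False take_diff_cons[of False True] unfolding lf'_def by auto
      qed
    qed
    ultimately show ?thesis by blast
  qed
qed

lemma finite_nodes: "finite (ptree_nodes lo hi t)"
  by (induction t arbitrary: lo hi) auto



theorem theorem3p3:
  fixes X :: "point set" and t :: ptree and U :: "(bool list \<times> int \<times> int) set"
  assumes "finite X"
    and "semi_perm X"
    and "partitioning_tree X t"
    and "cut_set X t U"
  shows "(\<Sum>v\<in>U. opt (strip_inst X v)) + opt (compressed X U) \<le> opt X"
proof -
  note finX = assms(1) and sp = assms(2)
  define lo0 where "lo0 = Min (fst ` X)"
  define hi0 where "hi0 = Max (fst ` X)"
  have pt: "is_ptree X lo0 hi0 t" using assms(3) unfolding partitioning_tree_def lo0_def hi0_def .
  have UV: "U \<subseteq> ptree_nodes lo0 hi0 t" using assms(4) unfolding cut_set_def vertices_def lo0_def hi0_def by blast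
  have cutc: "\<And>l. l \<in> ptree_leaves lo0 hi0 t \<Longrightarrow> card {v \<in> U. \<exists>n. fst v = take n (fst l)} = 1"
    using assms(4) unfolding cut_set_def leaves_def lo0_def hi0_def by blast
  have finU: "finite U" using UV finite_nodes finite_subset by blast
  have "X \<noteq> {}" using ptree_active[OF pt] unfolding active_cols_def by auto
  hence fX: "finite (fst ` X)" "fst ` X \<noteq> {}" using finX by auto
  have Xb: "lo0 \<le> fst p \<and> fst p \<le> hi0" if "p \<in> X" for p
    unfolding lo0_def hi0_def using fX that by simp
  define inS where "inS = (\<lambda>(v::bool list \<times> int \<times> int) c. fst (snd v) \<le> c \<and> c \<le> snd (snd v))"
  have uniq: "\<exists>!v. v \<in> U \<and> inS v c" if cc: "lo0 \<le> c" "c \<le> hi0" for c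
  proof -
    obtain l where l: "l \<in> ptree_leaves lo0 hi0 t"
      and H: "\<forall>v \<in> ptree_nodes lo0 hi0 t. (fst (snd v) \<le> c \<and> c \<le> snd (snd v)) \<longleftrightarrow> (\<exists>n. fst v = take n (fst l))"
      using ptree_locate[OF pt cc] by blast
    have "{v \<in> U. \<exists>n. fst v = take n (fst l)} = {v \<in> U. inS v c}"
      using H UV unfolding inS_def by auto
    hence "card {v \<in> U. inS v c} = 1" using cutc[OF l] by simp
    then obtain v where "{v \<in> U. inS v c} = {v}" by (meson card_1_singletonE)
    thus ?thesis by (intro ex1I[of _ v]) auto
  qed
  define \<nu> where "\<nu> = (\<lambda>c. THE v. v \<in> U \<and> inS v c)"
  have nu1: "\<nu> c \<in> U \<and> inS (\<nu> c) c" if "lo0 \<le> c" "c \<le> hi0" for c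
    unfolding \<nu>_def using theI'[OF uniq[OF that]] .
  have nu2: "\<nu> c = v" if "lo0 \<le> c" "c \<le> hi0" "v \<in> U" "inS v c" for c v
    unfolding \<nu>_def using uniq[OF that(1,2)] that(3,4) by (intro the1_equality) auto
  have Ub: "lo0 \<le> fst (snd v) \<and> snd (snd v) \<le> hi0 \<and> strip_inst X v \<noteq> {}" if "v \<in> U" for v
  proof -
    have "lo0 \<le> fst (snd v) \<and> snd (snd v) \<le> hi0 \<and> active_cols X (fst (snd v)) (snd (snd v)) \<noteq> {}"
      using ptree_nodes_props[OF pt] UV that by blast
    thus ?thesis unfolding active_cols_def strip_inst_def by auto
  qed
  have sx: "inS v (strip_x X v) \<and> lo0 \<le> strip_x X v \<and> strip_x X v \<le> hi0" if "v \<in> U" for v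
  proof -
    have "finite (strip_inst X v)" unfolding strip_inst_def using finX by simp
    hence "strip_x X v \<in> fst ` strip_inst X v" unfolding strip_x_def using Ub[OF that] by simp
    then obtain q where "q \<in> strip_inst X v" "fst q = strip_x X v" by auto
    moreover have "lo0 \<le> fst q \<and> fst q \<le> hi0" using Xb \<open>q \<in> strip_inst X v\<close> unfolding strip_inst_def by blast
    ultimately show ?thesis unfolding strip_inst_def inS_def by auto
  qed
  define h1 where "h1 = (\<lambda>c. strip_x X (\<nu> c))"
  have h1mono: "h1 c \<le> h1 d" if "lo0 \<le> c" "c \<le> d" "d \<le> hi0" for c d
  proof (cases "\<nu> c = \<nu> d")
    case True thus ?thesis unfolding h1_def by simp
  next
    case False
    define v where "v = \<nu> c"
    define w where "w = \<nu> d"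
    have v: "v \<in> U" "inS v c" using nu1[of c] that unfolding v_def by auto
    have w: "w \<in> U" "inS w d" using nu1[of d] that unfolding w_def by auto
    have "snd (snd v) < fst (snd w)"
    proof (rule ccontr)
      assume "\<not> snd (snd v) < fst (snd w)"
      define e where "e = max (fst (snd v)) (fst (snd w))"
      have "inS v e" "inS w e" using v w that \<open>\<not> snd (snd v) < fst (snd w)\<close>
        unfolding e_def inS_def by auto
      moreover have "lo0 \<le> e" "e \<le> hi0" using Ub[OF v(1)] Ub[OF w(1)] \<open>inS v e\<close> unfolding e_def inS_def by auto
      ultimately have "\<nu> e = v" "\<nu> e = w" using nu2[of e v] nu2[of e w] v(1) w(1) by blast+
      thus False using False unfolding v_def w_def by simp
    qed
    thus ?thesis using sx[OF v(1)] sx[OF w(1)] unfolding h1_def v_def w_def inS_def by auto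
  qed
  obtain Y where Y: "finite Y" "card Y = opt X" "satisfied (X \<union> Y)" using opt_exists[OF finX] by blast
  define Z where "Z = {p \<in> X \<union> Y. lo0 \<le> fst p \<and> fst p \<le> hi0}"
  have finZ: "finite Z" unfolding Z_def using finX Y(1) by simp
  have satZ: "satisfied Z" unfolding Z_def by (rule restrict_sat[OF Y(3)])
  have XZ: "X \<subseteq> Z" unfolding Z_def using Xb by auto
  have cZ: "card Z \<le> card X + card Y"
  proof -
    have "Z \<subseteq> X \<union> Y" unfolding Z_def by auto
    hence "card Z \<le> card (X \<union> Y)" using finX Y(1) by (simp add: card_mono)
    thus ?thesis using card_Un_le[of X Y] by linarith
  qed
  define Zv where "Zv = (\<lambda>v::bool list \<times> int \<times> int. {p \<in> Z. fst (snd v) \<le> fst p \<and> fst p \<le> snd (snd v)})"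
  have finZv: "finite (Zv v)" for v unfolding Zv_def using finZ by simp
  have satZv: "satisfied (Zv v)" for v unfolding Zv_def by (rule restrict_sat[OF satZ])
  have stripZ: "strip_inst X v \<subseteq> Zv v" for v unfolding Zv_def strip_inst_def using XZ by auto
  have spv: "semi_perm (strip_inst X v)" for v using sp unfolding semi_perm_def strip_inst_def by blast
  have C1: "opt (strip_inst X v) + card (snd ` Zv v) \<le> card (Zv v)" for v
    using rows_bound[OF finZv satZv stripZ spv] .
  have S1: "(\<Sum>v\<in>U. opt (strip_inst X v)) + (\<Sum>v\<in>U. card (snd ` Zv v)) \<le> (\<Sum>v\<in>U. card (Zv v))"
    using sum_mono[of U "\<lambda>v. opt (strip_inst X v) + card (snd ` Zv v)" "\<lambda>v. card (Zv v)", OF C1]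
    by (simp add: sum.distrib)
  have Zun: "Z = (\<Union>v\<in>U. Zv v)"
  proof
    show "Z \<subseteq> (\<Union>v\<in>U. Zv v)"
    proof
      fix p assume p: "p \<in> Z"
      hence "lo0 \<le> fst p" "fst p \<le> hi0" unfolding Z_def by auto
      from nu1[OF this] show "p \<in> (\<Union>v\<in>U. Zv v)" using p unfolding Zv_def inS_def by auto
    qed
    show "(\<Union>v\<in>U. Zv v) \<subseteq> Z" unfolding Zv_def by auto
  qed
  have disj: "\<forall>v\<in>U. \<forall>w\<in>U. v \<noteq> w \<longrightarrow> Zv v \<inter> Zv w = {}"
  proof (intro ballI impI)
    fix v w assume vw: "v \<in> U" "w \<in> U" "v \<noteq> w"
    show "Zv v \<inter> Zv w = {}"
    proof (rule ccontr)
      assume "Zv v \<inter> Zv w \<noteq> {}"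
      then obtain p where p: "p \<in> Zv v" "p \<in> Zv w" by blast
      hence "lo0 \<le> fst p" "fst p \<le> hi0" "inS v (fst p)" "inS w (fst p)" unfolding Zv_def Z_def inS_def by auto
      hence "\<nu> (fst p) = v" "\<nu> (fst p) = w" using nu2[of "fst p" v] nu2[of "fst p" w] vw by blast+
      thus False using vw by simp
    qed
  qed
  have cardZ: "card Z = (\<Sum>v\<in>U. card (Zv v))"
    unfolding Zun by (rule card_UN_disjoint[OF finU]) (use finZv disj in auto)
  define g where "g = (\<lambda>p::point. (h1 (fst p), snd p))"
  have satC: "satisfied (g ` Z)"
  proof -
    have "satisfied ((\<lambda>p. (h1 (fst p), (\<lambda>y. y) (snd p))) ` Z)"
      by (rule mono_sat[OF finZ satZ]) (use h1mono in \<open>auto simp: Z_def\<close>)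
    thus ?thesis unfolding g_def by simp
  qed
  have comp: "compressed X U = g ` X"
  proof
    show "compressed X U \<subseteq> g ` X"
    proof
      fix z assume "z \<in> compressed X U"
      then obtain q v where qv: "z = (strip_x X v, snd q)" "v \<in> U" "q \<in> strip_inst X v"
        unfolding compressed_def by blast
      have "q \<in> X" "inS v (fst q)" using qv(3) unfolding strip_inst_def inS_def by auto
      hence "\<nu> (fst q) = v" using nu2 Xb qv(2) by blast
      hence "z = g q" unfolding g_def h1_def using qv(1) by simp
      thus "z \<in> g ` X" using \<open>q \<in> X\<close> by blast
    qed
    show "g ` X \<subseteq> compressed X U"
    proof
      fix z assume "z \<in> g ` X"
      then obtain q where q: "q \<in> X" "z = g q" by blast
      define v where "v = \<nu> (fst q)"
      have v: "v \<in> U" "inS v (fst q)" using nu1 Xb[OF q(1)] unfolding v_def by auto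
      hence "q \<in> strip_inst X v" using q(1) unfolding strip_inst_def inS_def by auto
      moreover have "z = (strip_x X v, snd q)" using q(2) unfolding g_def h1_def v_def by simp
      ultimately show "z \<in> compressed X U" unfolding compressed_def using v(1) by blast
    qed
  qed
  have cardgX: "card (g ` X) = card X"
    by (rule card_image, rule inj_onI) (use sp in \<open>auto simp: g_def semi_perm_def\<close>)
  have gXZ: "g ` X \<subseteq> g ` Z" using XZ by blast
  have optC: "opt (compressed X U) \<le> card (g ` Z) - card X"
  proof -
    have "opt (g ` X) \<le> card (g ` Z - g ` X)" using opt_le[OF _ satC gXZ] finZ by simp
    also have "\<dots> = card (g ` Z) - card (g ` X)" using gXZ finZ by (simp add: card_Diff_subset finite_subset)
    finally show ?thesis using comp cardgX by simp
  qed
  have cgXZ: "card X \<le> card (g ` Z)" using cardgX gXZ finZ by (metis card_mono finite_imageI)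
  have cC: "card (g ` Z) \<le> (\<Sum>v\<in>U. card (snd ` Zv v))"
  proof -
    have "g ` Z \<subseteq> (\<Union>v\<in>U. (\<lambda>y. (strip_x X v, y)) ` snd ` Zv v)"
    proof
      fix z assume "z \<in> g ` Z"
      then obtain p where p: "p \<in> Z" "z = g p" by blast
      hence b: "lo0 \<le> fst p" "fst p \<le> hi0" unfolding Z_def by auto
      define v where "v = \<nu> (fst p)"
      have v: "v \<in> U" "inS v (fst p)" using nu1[OF b] unfolding v_def by auto
      have "p \<in> Zv v" using p(1) v(2) unfolding Zv_def inS_def by auto
      moreover have "z = (strip_x X v, snd p)" using p(2) unfolding g_def h1_def v_def by simp
      ultimately show "z \<in> (\<Union>v\<in>U. (\<lambda>y. (strip_x X v, y)) ` snd ` Zv v)" using v(1) by blast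
    qed
    hence "card (g ` Z) \<le> card (\<Union>v\<in>U. (\<lambda>y. (strip_x X v, y)) ` snd ` Zv v)"
      using finU finZv by (intro card_mono) auto
    also have "\<dots> \<le> (\<Sum>v\<in>U. card ((\<lambda>y. (strip_x X v, y)) ` snd ` Zv v))"
      using finU by (rule card_UN_le)
    also have "\<dots> \<le> (\<Sum>v\<in>U. card (snd ` Zv v))"
      by (rule sum_mono) (rule card_image_le, use finZv in simp)
    finally show ?thesis .
  qed
  show ?thesis using S1 cardZ optC cgXZ cC cZ Y(2) by linarith
qed

end
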